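(* Let $a_2,a_5$ be real constants, not both zero, and $k_1,k_3$ real constants. On the region where $r=\sqrt{x^2+y^2}>0$ and $a_2y-a_5x\neq0$, let $$V=\frac{k_1}{(a_2y-a_5x)^2}+\frac{k_3(a_2x+a_5y)}{r(a_2y-a_5x)^2},$$ let $L=x\dot y-y\dot x$, and let $$K=(a_2\dot x+a_5\dot y)L^2+\frac{2k_1r^2}{(a_2y-a_5x)^2}(a_2\dot x+a_5\dot y)+\frac{k_3r}{a_2y-a_5x}(a_2\dot y-a_5\dot x)-\frac{k_3(a_2x+a_5y)}{r(a_2y-a_5x)}L+\frac{2k_3(a_2x+a_5y)r}{(a_2y-a_5x)^2}(a_2\dot x+a_5\dot y).$$ Then the time-dependent function $$J=-tK+(a_2x+a_5y)L^2+\frac{2k_1r^2(a_2x+a_5y)}{(a_2y-a_5x)^2}+\frac{2k_3r(a_2x+a_5y)^2}{(a_2y-a_5x)^2}+k_3r$$ is a first integral of $\ddot x=-V_{,x}$, $\ddot y=-V_{,y}$.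
   Context: A first integral is a function of $(t,x,y,\dot x,\dot y)$ whose total time derivative vanishes along every solution of the given equations of motion. *)

theory Defs
  imports "HOL-Analysis.Analysis"
begin

definition rad :: "real \<Rightarrow> real \<Rightarrow> real" where
  "rad x y = sqrt (x\<^sup>2 + y\<^sup>2)"

definition Vpot :: "real \<Rightarrow> real \<Rightarrow> real \<Rightarrow> real \<Rightarrow> real \<Rightarrow> real \<Rightarrow> real" where
  "Vpot a2 a5 k1 k3 x y =
     k1 / (a2*y - a5*x)\<^sup>2 + k3 * (a2*x + a5*y) / (rad x y * (a2*y - a5*x)\<^sup>2)"

definition Lmom :: "real \<Rightarrow> real \<Rightarrow> real \<Rightarrow> real \<Rightarrow> real" where
  "Lmom x y xd yd = x*yd - y*xd"

definition Kfun :: "real \<Rightarrow> real \<Rightarrow> real \<Rightarrow> real \<Rightarrow> real \<Rightarrow> real \<Rightarrow> real \<Rightarrow> real \<Rightarrow> real" where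
  "Kfun a2 a5 k1 k3 x y xd yd =
     (a2*xd + a5*yd) * (Lmom x y xd yd)\<^sup>2
     + 2*k1*(rad x y)\<^sup>2 / (a2*y - a5*x)\<^sup>2 * (a2*xd + a5*yd)
     + k3 * rad x y / (a2*y - a5*x) * (a2*yd - a5*xd)
     - k3 * (a2*x + a5*y) / (rad x y * (a2*y - a5*x)) * Lmom x y xd yd
     + 2*k3*(a2*x + a5*y) * rad x y / (a2*y - a5*x)\<^sup>2 * (a2*xd + a5*yd)"

definition Jfun :: "real \<Rightarrow> real \<Rightarrow> real \<Rightarrow> real \<Rightarrow> real \<Rightarrow> real \<Rightarrow> real \<Rightarrow> real \<Rightarrow> real \<Rightarrow> real" where
  "Jfun a2 a5 k1 k3 t x y xd yd =
     - t * Kfun a2 a5 k1 k3 x y xd yd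
     + (a2*x + a5*y) * (Lmom x y xd yd)\<^sup>2
     + 2*k1*(rad x y)\<^sup>2 * (a2*x + a5*y) / (a2*y - a5*x)\<^sup>2
     + 2*k3*rad x y * (a2*x + a5*y)\<^sup>2 / (a2*y - a5*x)\<^sup>2
     + k3 * rad x y"

end

theory Submission imports Defs begin

definition VX where "VX a2 a5 k1 k3 x y = 2*k1*a5/(a2*y - a5*x)^3 + k3*(a2/(rad x y*(a2*y - a5*x)^2) - (a2*x+a5*y)*x/(rad x y^3*(a2*y - a5*x)^2) + 2*a5*(a2*x+a5*y)/(rad x y*(a2*y - a5*x)^3))"
definition VY where "VY a2 a5 k1 k3 x y = -2*k1*a2/(a2*y - a5*x)^3 + k3*(a5/(rad x y*(a2*y - a5*x)^2) - (a2*x+a5*y)*y/(rad x y^3*(a2*y - a5*x)^2) - 2*a2*(a2*x+a5*y)/(rad x y*(a2*y - a5*x)^3))"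

lemma rad_pos_sum: "rad x y > 0 \<Longrightarrow> x^2 + y^2 > 0"
  unfolding rad_def by (metis real_sqrt_gt_0_iff)

lemma rad_sq: "rad x y ^ 2 = x^2 + y^2"
  unfolding rad_def by simp

lemma rad_deriv_gen:
  assumes "rad (f t) (g t) > 0" "(f has_real_derivative f') (at t within S)" "(g has_real_derivative g') (at t within S)"
  shows "((\<lambda>s. rad (f s) (g s)) has_real_derivative (f t * f' + g t * g') / rad (f t) (g t)) (at t within S)"
proof -
  have p: "f t ^2 + g t^2 > 0" using assms(1) rad_pos_sum by blast
  have h: "((\<lambda>s. (f s)^2 + (g s)^2) has_real_derivative 2*f t*f' + 2*g t*g') (at t within S)"
    by (rule derivative_eq_intros assms refl | simp)+
  have "((\<lambda>s. sqrt ((f s)^2 + (g s)^2)) has_real_derivative (inverse (sqrt (f t ^2 + g t^2)) / 2) * (2*f t*f' + 2*g t*g')) (at t within S)"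
    by (rule DERIV_chain2[OF DERIV_real_sqrt[OF p] h])
  moreover have "sqrt (f t ^2 + g t^2) > 0" using p by simp
  then have "(inverse (sqrt (f t ^2 + g t^2)) / 2) * (2*f t*f' + 2*g t*g') = (f t * f' + g t * g') / sqrt (f t ^2 + g t^2)"
    by (cases "sqrt (f t ^2 + g t^2) = 0") (simp_all add: field_simps)
  ultimately show ?thesis unfolding rad_def by metis
qed

lemma VX_deriv:
  assumes "rad x y > 0" "a2*y - a5*x \<noteq> 0"
  shows "deriv (\<lambda>u. Vpot a2 a5 k1 k3 u y) x = VX a2 a5 k1 k3 x y"
proof -
  define D where "D = a2*y - a5*x"
  have "((\<lambda>u. Vpot a2 a5 k1 k3 u y) has_real_derivative VX a2 a5 k1 k3 x y) (at x)"
  proof -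
    have r: "((\<lambda>u. rad u y) has_real_derivative (x * 1 + y * 0) / rad x y) (at x)"
      using rad_deriv_gen[of "\<lambda>u. u" x "\<lambda>u. y" 1 UNIV 0] assms by (auto intro: derivative_eq_intros)
    show ?thesis unfolding Vpot_def
      apply (rule derivative_eq_intros r refl | use assms in \<open>simp; fail\<close>)+
      unfolding VX_def using assms unfolding D_def[symmetric] by (simp add: field_simps; algebra)
  qed
  then show ?thesis by (rule DERIV_imp_deriv)
qed

lemma VY_deriv:
  assumes "rad x y > 0" "a2*y - a5*x \<noteq> 0"
  shows "deriv (\<lambda>w. Vpot a2 a5 k1 k3 x w) y = VY a2 a5 k1 k3 x y"
proof -
  define D where "D = a2*y - a5*x"
  have "((\<lambda>w. Vpot a2 a5 k1 k3 x w) has_real_derivative VY a2 a5 k1 k3 x y) (at y)"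
  proof -
    have r: "((\<lambda>w. rad x w) has_real_derivative (x * 0 + y * 1) / rad x y) (at y)"
      using rad_deriv_gen[of "\<lambda>u. x" y "\<lambda>u. u" 0 UNIV 1] assms by (auto intro: derivative_eq_intros)
    show ?thesis unfolding Vpot_def
      apply (rule derivative_eq_intros r refl | use assms in \<open>simp; fail\<close>)+
      unfolding VY_def using assms unfolding D_def[symmetric] by (simp add: field_simps; algebra)
  qed
  then show ?thesis by (rule DERIV_imp_deriv)
qed

theorem mainTheorem8:
  fixes a2 a5 k1 k3 :: real
    and T :: "real set"
    and x y xd yd :: "real \<Rightarrow> real"
  assumes notboth: "a2 \<noteq> 0 \<or> a5 \<noteq> 0"
    and T_open: "open T"
    and region: "\<And>t. t \<in> T \<Longrightarrow> rad (x t) (y t) > 0 \<and> a2 * y t - a5 * x t \<noteq> 0"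
    and dx: "\<And>t. t \<in> T \<Longrightarrow> (x has_real_derivative xd t) (at t)"
    and dy: "\<And>t. t \<in> T \<Longrightarrow> (y has_real_derivative yd t) (at t)"
    and dxd: "\<And>t. t \<in> T \<Longrightarrow>
               (xd has_real_derivative - deriv (\<lambda>u. Vpot a2 a5 k1 k3 u (y t)) (x t)) (at t)"
    and dyd: "\<And>t. t \<in> T \<Longrightarrow>
               (yd has_real_derivative - deriv (\<lambda>w. Vpot a2 a5 k1 k3 (x t) w) (y t)) (at t)"
  shows "\<forall>t\<in>T. ((\<lambda>s. Jfun a2 a5 k1 k3 s (x s) (y s) (xd s) (yd s))
                  has_real_derivative 0) (at t)"
proof
  fix t assume t: "t \<in> T"
  have R0: "rad (x t) (y t) > 0" and D0: "a2 * y t - a5 * x t \<noteq> 0" using region[OF t] by auto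
  have R0': "rad (x t) (y t) \<noteq> 0" using R0 by simp
  note r = rad_deriv_gen[OF R0 dx[OF t] dy[OF t]]
  note ddx = dxd[OF t, unfolded VX_deriv[OF R0 D0]]
  note ddy = dyd[OF t, unfolded VY_deriv[OF R0 D0]]
  define D where "D = a2 * y t - a5 * x t"
  have sq: "rad (x t) (y t) ^ 2 = x t ^ 2 + y t ^ 2" by (rule rad_sq)
  define A where "A s = inverse (a2 * y s - a5 * x s)" for s
  define B where "B s = inverse (rad (x s) (y s))" for s
  define R where "R s = rad (x s) (y s)" for s
  have Jeq: "Jfun a2 a5 k1 k3 s (x s) (y s) (xd s) (yd s) =
     - s * ((a2*xd s + a5*yd s) * (x s * yd s - y s * xd s)^2
     + 2*k1*(R s)^2 * (A s)^2 * (a2*xd s + a5*yd s)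
     + k3 * R s * A s * (a2*yd s - a5*xd s)
     - k3 * (a2*x s + a5*y s) * B s * A s * (x s * yd s - y s * xd s)
     + 2*k3*(a2*x s + a5*y s) * R s * (A s)^2 * (a2*xd s + a5*yd s))
     + (a2*x s + a5*y s) * (x s * yd s - y s * xd s)^2
     + 2*k1*(R s)^2 * (a2*x s + a5*y s) * (A s)^2
     + 2*k3*R s * (a2*x s + a5*y s)^2 * (A s)^2
     + k3 * R s" for s
    unfolding Jfun_def Kfun_def Lmom_def A_def B_def R_def
    by (simp only: divide_inverse power_inverse inverse_mult_distrib) (simp add: algebra_simps)
  have dA: "(A has_real_derivative (- ((A t)^2 * (a2 * yd t - a5 * xd t)))) (at t)"
    unfolding A_def
    apply (rule derivative_eq_intros dx[OF t] dy[OF t] refl | use D0 in \<open>simp; fail\<close>)+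
    by (simp add: power2_eq_square)
  have dR: "(R has_real_derivative (x t * xd t + y t * yd t) * B t) (at t)"
    using r unfolding R_def B_def by (simp add: divide_inverse)
  have dB: "(B has_real_derivative (- ((B t)^2 * ((x t * xd t + y t * yd t) * B t)))) (at t)"
  proof -
    have "((\<lambda>s. inverse (R s)) has_real_derivative - (inverse (R t) * ((x t * xd t + y t * yd t) * B t) * inverse (R t))) (at t)"
      by (rule derivative_eq_intros dR refl | use R0' in \<open>simp add: R_def; fail\<close>)+
    then show ?thesis unfolding B_def[abs_def] R_def by (simp add: power2_eq_square algebra_simps)
  qed
  have VXe: "VX a2 a5 k1 k3 (x t) (y t) = 2*k1*a5*(A t)^3 + k3*(a2*B t*(A t)^2 - (a2*x t+a5*y t)*x t*(B t)^3*(A t)^2 + 2*a5*(a2*x t+a5*y t)*B t*(A t)^3)"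
    unfolding VX_def A_def B_def by (simp only: divide_inverse power_inverse inverse_mult_distrib) (simp add: algebra_simps)
  have VYe: "VY a2 a5 k1 k3 (x t) (y t) = -2*k1*a2*(A t)^3 + k3*(a5*B t*(A t)^2 - (a2*x t+a5*y t)*y t*(B t)^3*(A t)^2 - 2*a2*(a2*x t+a5*y t)*B t*(A t)^3)"
    unfolding VY_def A_def B_def by (simp only: divide_inverse power_inverse inverse_mult_distrib) (simp add: algebra_simps)
  have rel1: "R t * B t = 1" unfolding R_def B_def using R0' by simp
  have rel2: "(a2 * y t - a5 * x t) * A t = 1" unfolding A_def using D0 by simp
  have rel3: "R t ^ 2 = x t ^ 2 + y t ^ 2" unfolding R_def by (rule rad_sq)
  have two: "(2::nat) - Suc 0 = 1" by simp
  show "((\<lambda>s. Jfun a2 a5 k1 k3 s (x s) (y s) (xd s) (yd s)) has_real_derivative 0) (at t)"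
    unfolding Jeq
    apply (rule derivative_eq_intros dA dB dR ddx ddy dx[OF t] dy[OF t] refl)+
    unfolding VXe VYe using rel1 rel2 rel3
    apply (simp only: of_nat_numeral two power_one_right mult_zero_left add_0)
    by algebra
qed

end
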